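(* Let $(S,K,I)$ be a split graph and let $v_1\ldots v_n$, with $n\geq 2$, be an induced path in the factor graph $\Phi(S)$. If $\sigma_{i,i+1}=1$ for some $i\in[n-1]$, then $i\in\{1,n-1\}$.
   Context: A split graph $(S,K,I)$ is a graph $S$ together with a fixed partition $V(S)=K\dot\cup I$, where $K$ is a clique and $I$ is an independent set. For a vertex $v$ of $S$, $N_v$ denotes its open neighborhood in $S$ and $d_v=|N_v|$; $\eta_{uv}=|N_u\cap N_v|$. The factor graph $\Phi(S)$ is the loopless multigraph with vertex set $I$ in which, for distinct $u,v\in I$, there is one edge joining $u$ and $v$ for each 2-switch of $S$ acting on $u$ and $v$ (a 2-switch replaces edges $ab,cd$ with $ac,bd$ when $ab,cd\in E(S)$ and $ac,bd\notin E(S)$); equivalently, the multiplicity of $uv$ is $\sigma_{uv}=(d_u-\eta_{uv})(d_v-\eta_{uv})$, and $u,v$ are adjacent iff $\sigma_{uv}>0$; $\sigma_{i,i+1}$ denotes $\sigma_{v_iv_{i+1}}$. An induced path in $\Phi(S)$ consists of distinct vertices with consecutive ones adjacent and no other pair adjacent (multiplicities ignored). *)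

theory Defs
  imports Main
begin

definition simple_graph :: "'a set \<Rightarrow> ('a \<Rightarrow> 'a \<Rightarrow> bool) \<Rightarrow> bool" where
  "simple_graph V E \<longleftrightarrow> finite V \<and> (\<forall>x y. E x y \<longrightarrow> E y x) \<and> (\<forall>x. \<not> E x x)
     \<and> (\<forall>x y. E x y \<longrightarrow> x \<in> V \<and> y \<in> V)"

definition split_graph :: "'a set \<Rightarrow> ('a \<Rightarrow> 'a \<Rightarrow> bool) \<Rightarrow> 'a set \<Rightarrow> 'a set \<Rightarrow> bool" where
  "split_graph V E K I \<longleftrightarrow> simple_graph V E \<and> V = K \<union> I \<and> K \<inter> I = {}
     \<and> (\<forall>x\<in>K. \<forall>y\<in>K. x \<noteq> y \<longrightarrow> E x y)
     \<and> (\<forall>x\<in>I. \<forall>y\<in>I. \<not> E x y)"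

definition nbhd :: "'a set \<Rightarrow> ('a \<Rightarrow> 'a \<Rightarrow> bool) \<Rightarrow> 'a \<Rightarrow> 'a set" where
  "nbhd V E v = {w \<in> V. E v w}"

definition deg :: "'a set \<Rightarrow> ('a \<Rightarrow> 'a \<Rightarrow> bool) \<Rightarrow> 'a \<Rightarrow> nat" where
  "deg V E v = card (nbhd V E v)"

definition eta :: "'a set \<Rightarrow> ('a \<Rightarrow> 'a \<Rightarrow> bool) \<Rightarrow> 'a \<Rightarrow> 'a \<Rightarrow> nat" where
  "eta V E u v = card (nbhd V E u \<inter> nbhd V E v)"

text \<open>Multiplicity of the edge uv in the factor graph.\<close>
definition sigma :: "'a set \<Rightarrow> ('a \<Rightarrow> 'a \<Rightarrow> bool) \<Rightarrow> 'a \<Rightarrow> 'a \<Rightarrow> nat" where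
  "sigma V E u v = (deg V E u - eta V E u v) * (deg V E v - eta V E u v)"

definition factor_adj :: "'a set \<Rightarrow> ('a \<Rightarrow> 'a \<Rightarrow> bool) \<Rightarrow> 'a set \<Rightarrow> 'a \<Rightarrow> 'a \<Rightarrow> bool" where
  "factor_adj V E I u v \<longleftrightarrow> u \<in> I \<and> v \<in> I \<and> u \<noteq> v \<and> sigma V E u v > 0"

definition factor_induced_path ::
  "'a set \<Rightarrow> ('a \<Rightarrow> 'a \<Rightarrow> bool) \<Rightarrow> 'a set \<Rightarrow> (nat \<Rightarrow> 'a) \<Rightarrow> nat \<Rightarrow> bool" where
  "factor_induced_path V E I p n \<longleftrightarrow>
     (\<forall>i\<in>{1..n}. p i \<in> I) \<and> inj_on p {1..n}
     \<and> (\<forall>i\<in>{1..n}. \<forall>j\<in>{1..n}.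
          factor_adj V E I (p i) (p j) \<longleftrightarrow> (j = i + 1 \<or> i = j + 1))"

end

theory Submission
  imports Defs
begin

lemma sig_card:
  assumes "finite V"
  shows "sigma V E u v = card (nbhd V E u - nbhd V E v) * card (nbhd V E v - nbhd V E u)"
proof -
  have f: "finite (nbhd V E w)" for w using assms by (simp add: nbhd_def)
  have 1: "card (nbhd V E u - nbhd V E v) = deg V E u - eta V E u v"
    unfolding deg_def eta_def by (rule card_Diff_subset_Int) (use f in blast)
  have 2: "card (nbhd V E v - nbhd V E u) = deg V E v - eta V E u v"
    unfolding deg_def eta_def by (subst Int_commute, rule card_Diff_subset_Int) (use f in blast)
  show ?thesis unfolding sigma_def 1 2 ..
qed

lemma sig0:
  assumes "finite V"
  shows "sigma V E u v = 0 \<longleftrightarrow> nbhd V E u \<subseteq> nbhd V E v \<or> nbhd V E v \<subseteq> nbhd V E u"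
proof -
  have f: "finite (nbhd V E w)" for w using assms by (simp add: nbhd_def)
  have "card (nbhd V E u - nbhd V E v) = 0 \<longleftrightarrow> nbhd V E u \<subseteq> nbhd V E v" using f by simp
  moreover have "card (nbhd V E v - nbhd V E u) = 0 \<longleftrightarrow> nbhd V E v \<subseteq> nbhd V E u" using f by simp
  ultimately show ?thesis unfolding sig_card[OF assms] mult_is_0 by (simp only:)
qed

lemma key:
  assumes ab: "X - Y = {a}" "Y - X = {b}"
    and o: "Z \<subseteq> Y \<or> Y \<subseteq> Z" and n1: "\<not> Z \<subseteq> X" and n2: "\<not> X \<subseteq> Z"
  shows "b \<in> Z \<and> a \<notin> Z"
proof
  have bY: "b \<in> Y" "b \<notin> X" using ab(2) by auto
  have aX: "a \<in> X" "a \<notin> Y" using ab(1) by auto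
  show "b \<in> Z"
  proof (cases "Z \<subseteq> Y")
    case True
    from n1 obtain z where z: "z \<in> Z" "z \<notin> X" by auto
    then have "z \<in> Y - X" using True by auto
    then have "z = b" using ab(2) by auto
    then show ?thesis using z by simp
  next
    case False
    then show ?thesis using o bY by auto
  qed
  show "a \<notin> Z"
  proof
    assume aZ: "a \<in> Z"
    show False
    proof (cases "Z \<subseteq> Y")
      case True then show False using aZ aX by auto
    next
      case False
      then have YZ: "Y \<subseteq> Z" using o by auto
      have "X \<subseteq> Z"
      proof
        fix x assume "x \<in> X"
        show "x \<in> Z"
        proof (cases "x \<in> Y")
          case True then show ?thesis using YZ by auto
        next
          case False then have "x \<in> X - Y" using \<open>x \<in> X\<close> by auto
          then have "x = a" using ab(1) by auto
          then show ?thesis using aZ by simp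
        qed
      qed
      then show False using n2 by simp
    qed
  qed
qed

theorem corollary4p6:
  fixes V K I :: "'a set" and E :: "'a \<Rightarrow> 'a \<Rightarrow> bool" and p :: "nat \<Rightarrow> 'a" and n i :: nat
  assumes "split_graph V E K I"
    and "n \<ge> 2"
    and "factor_induced_path V E I p n"
    and "i \<in> {1..n-1}"
    and "sigma V E (p i) (p (i+1)) = 1"
  shows "i \<in> {1, n-1}"
proof (rule ccontr)
  assume c: "i \<notin> {1, n-1}"
  have fV: "finite V" using assms(1) unfolding split_graph_def simple_graph_def by (elim conjE)
  let ?N = "nbhd V E"
  have hi: "2 \<le> i" "i + 2 \<le> n" using c assms(4) by auto
  have P: "\<forall>i\<in>{1..n}. p i \<in> I" "inj_on p {1..n}"
    "\<forall>i\<in>{1..n}. \<forall>j\<in>{1..n}. factor_adj V E I (p i) (p j) \<longleftrightarrow> (j = i + 1 \<or> i = j + 1)"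
    using assms(3) unfolding factor_induced_path_def by auto
  have nonadj: "sigma V E (p j) (p k) = 0" if "j \<in> {1..n}" "k \<in> {1..n}" "j \<noteq> k" "j \<noteq> k+1" "k \<noteq> j+1" for j k
  proof -
    have "p j \<noteq> p k" using inj_onD[OF P(2) _ that(1) that(2)] that(3) by blast
    moreover have "p j \<in> I" "p k \<in> I" using P(1) that(1,2) by blast+
    moreover have "\<not> factor_adj V E I (p j) (p k)" using P(3)[rule_format, OF that(1) that(2)] that(4,5) by simp
    ultimately show ?thesis by (simp add: factor_adj_def)
  qed
  have adj: "sigma V E (p j) (p (j+1)) > 0" if "j \<in> {1..n}" "j+1 \<in> {1..n}" for j
  proof -
    have "factor_adj V E I (p j) (p (j+1))" using P(3)[rule_format, OF that(1) that(2)] by simp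
    then show ?thesis by (simp add: factor_adj_def)
  qed
  have s1: "card (?N (p i) - ?N (p (i+1))) = 1" "card (?N (p (i+1)) - ?N (p i)) = 1"
    using assms(5) unfolding sig_card[OF fV, of E "p i" "p (i+1)"] by simp_all
  obtain a where a: "?N (p i) - ?N (p (i+1)) = {a}" using card_1_singletonE[OF s1(1)] by blast
  obtain b where b: "?N (p (i+1)) - ?N (p i) = {b}" using card_1_singletonE[OF s1(2)] by blast
  have i1: "i - 1 \<in> {1..n}" "i \<in> {1..n}" "i+1 \<in> {1..n}" "i+2 \<in> {1..n}" "i - 1 + 1 = i" using hi by auto
  have x1: "sigma V E (p (i-1)) (p (i+1)) = 0" using hi by (intro nonadj) auto
  have x2: "sigma V E (p (i-1)) (p i) > 0" using adj[OF i1(1)] i1(2) unfolding i1(5) by blast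
  have y1: "sigma V E (p (i+2)) (p i) = 0" using hi by (intro nonadj) auto
  have y2: "sigma V E (p (i+1)) (p (i+2)) > 0" using adj[OF i1(3)] i1(4) by (simp add: numeral_2_eq_2)
  have X: "b \<in> ?N (p (i-1)) \<and> a \<notin> ?N (p (i-1))"
  proof (rule key[OF a b])
    show "?N (p (i-1)) \<subseteq> ?N (p (i+1)) \<or> ?N (p (i+1)) \<subseteq> ?N (p (i-1))"
      using x1 sig0[OF fV, of E "p (i-1)" "p (i+1)"] by simp
    show "\<not> ?N (p (i-1)) \<subseteq> ?N (p i)" using x2 sig0[OF fV, of E "p (i-1)" "p i"] by simp
    show "\<not> ?N (p i) \<subseteq> ?N (p (i-1))" using x2 sig0[OF fV, of E "p (i-1)" "p i"] by simp
  qed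
  have Y: "a \<in> ?N (p (i+2)) \<and> b \<notin> ?N (p (i+2))"
  proof (rule key[OF b a])
    show "?N (p (i+2)) \<subseteq> ?N (p i) \<or> ?N (p i) \<subseteq> ?N (p (i+2))"
      using y1 sig0[OF fV, of E "p (i+2)" "p i"] by simp
    show "\<not> ?N (p (i+2)) \<subseteq> ?N (p (i+1))" using y2 sig0[OF fV, of E "p (i+1)" "p (i+2)"] by simp
    show "\<not> ?N (p (i+1)) \<subseteq> ?N (p (i+2))" using y2 sig0[OF fV, of E "p (i+1)" "p (i+2)"] by simp
  qed
  have "sigma V E (p (i-1)) (p (i+2)) = 0" using hi by (intro nonadj) auto
  then have "?N (p (i-1)) \<subseteq> ?N (p (i+2)) \<or> ?N (p (i+2)) \<subseteq> ?N (p (i-1))"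
    using sig0[OF fV, of E "p (i-1)" "p (i+2)"] by simp
  then show False using X Y by blast
qed

end
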